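(* Let $\mathcal H$ be a family of graphs. The following are equivalent: (i) there is a constant $c=c(\mathcal H)$ such that every connected $\mathcal H$-free graph $G$ has fewer than $c$ vertices of degree at least $2$; (ii) there is a positive integer $n$ such that $\mathcal H\le \{K_n,\ P_n,\ K_{1,n}^*,\ K_{2,n},\ K_2+nK_1,\ K_1+nK_2\}$.
   Context: All graphs are finite, simple, undirected. For graphs $H_1,H_2$, write $H_1\prec H_2$ if $H_2$ contains an induced subgraph isomorphic to $H_1$. A graph $G$ is $\mathcal H$-free if no $H\in\mathcal H$ satisfies $H\prec G$. For families $\mathcal H_1,\mathcal H_2$, write $\mathcal H_1\le\mathcal H_2$ if for every $H_2\in\mathcal H_2$ there is $H_1\in\mathcal H_1$ with $H_1\prec H_2$. $K_n$, $E_n$, $P_n$ are the complete graph, edgeless graph, and path on $n$ vertices; $K_{s,t}$ is the complete bipartite graph; $nG$ is the disjoint union of $n$ copies of $G$; $G_1+G_2$ is the join (disjoint union plus all edges between $V(G_1)$ and $V(G_2)$). $K_{1,n}^*$ is the graph obtained from the star $K_{1,n}$ by attaching a new pendant vertex to each leaf. *)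

theory Defs
  imports Main
begin

text \<open>A (finite, simple, undirected) graph is a pair of a vertex set and an
adjacency relation. Families of graphs are sets of graphs on vertex type nat
(every finite graph is isomorphic to one on nat).\<close>

type_synonym 'a graph = "'a set \<times> ('a \<Rightarrow> 'a \<Rightarrow> bool)"

definition verts :: "'a graph \<Rightarrow> 'a set" where "verts G = fst G"
definition adj :: "'a graph \<Rightarrow> 'a \<Rightarrow> 'a \<Rightarrow> bool" where "adj G = snd G"

definition is_graph :: "'a graph \<Rightarrow> bool" where
  "is_graph G \<longleftrightarrow> finite (verts G)
     \<and> (\<forall>x y. adj G x y \<longrightarrow> x \<in> verts G \<and> y \<in> verts G)
     \<and> (\<forall>x y. adj G x y \<longrightarrow> adj G y x)
     \<and> (\<forall>x. \<not> adj G x x)"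

definition induced_sub :: "'a graph \<Rightarrow> 'b graph \<Rightarrow> bool" (infix "\<prec>" 50) where
  "H \<prec> G \<longleftrightarrow> (\<exists>f. inj_on f (verts H) \<and> f ` verts H \<subseteq> verts G
      \<and> (\<forall>x\<in>verts H. \<forall>y\<in>verts H. adj H x y \<longleftrightarrow> adj G (f x) (f y)))"

definition family_free :: "'a graph set \<Rightarrow> 'b graph \<Rightarrow> bool" where
  "family_free \<H> G \<longleftrightarrow> (\<forall>H\<in>\<H>. \<not> H \<prec> G)"

definition family_le :: "'a graph set \<Rightarrow> 'b graph set \<Rightarrow> bool" where
  "family_le \<H>1 \<H>2 \<longleftrightarrow> (\<forall>H2\<in>\<H>2. \<exists>H1\<in>\<H>1. H1 \<prec> H2)"

definition degree :: "'a graph \<Rightarrow> 'a \<Rightarrow> nat" where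
  "degree G v = card {u \<in> verts G. adj G v u}"

definition connected :: "'a graph \<Rightarrow> bool" where
  "connected G \<longleftrightarrow> verts G \<noteq> {} \<and>
     (\<forall>x\<in>verts G. \<forall>y\<in>verts G. (adj G)\<^sup>*\<^sup>* x y)"

definition complete_graph :: "nat \<Rightarrow> nat graph" where
  "complete_graph n = ({0..<n}, \<lambda>x y. x < n \<and> y < n \<and> x \<noteq> y)"

definition path_graph :: "nat \<Rightarrow> nat graph" where
  "path_graph n = ({0..<n}, \<lambda>x y. x < n \<and> y < n \<and> (x = y + 1 \<or> y = x + 1))"

definition complete_bipartite :: "nat \<Rightarrow> nat \<Rightarrow> nat graph" where
  "complete_bipartite s t = ({0..<s+t}, \<lambda>x y. x < s + t \<and> y < s + t \<and> (x < s \<longleftrightarrow> \<not> y < s))"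

text \<open>K_{1,n}^*: centre 0, leaves 1..n, pendant vertex i+n attached to leaf i.\<close>
definition subdivided_star :: "nat \<Rightarrow> nat graph" where
  "subdivided_star n = ({0..2*n}, \<lambda>x y.
      (x = 0 \<and> 1 \<le> y \<and> y \<le> n) \<or> (y = 0 \<and> 1 \<le> x \<and> x \<le> n)
    \<or> (1 \<le> x \<and> x \<le> n \<and> y = x + n) \<or> (1 \<le> y \<and> y \<le> n \<and> x = y + n))"

definition K2_join_nK1 :: "nat \<Rightarrow> nat graph" where
  "K2_join_nK1 n = ({0..<n+2}, \<lambda>x y. x < n + 2 \<and> y < n + 2 \<and> x \<noteq> y \<and> (x < 2 \<or> y < 2))"

text \<open>K_1 + nK_2: vertex 0 joined to the n disjoint edges {2i-1, 2i}, 1 \<le> i \<le> n.\<close>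
definition K1_join_nK2 :: "nat \<Rightarrow> nat graph" where
  "K1_join_nK2 n = ({0..2*n}, \<lambda>x y. x \<le> 2*n \<and> y \<le> 2*n \<and> x \<noteq> y \<and>
      (x = 0 \<or> y = 0 \<or> (x - 1) div 2 = (y - 1) div 2))"

definition unavoidable_family :: "nat \<Rightarrow> nat graph set" where
  "unavoidable_family n = {complete_graph n, path_graph n, subdivided_star n,
      complete_bipartite 2 n, K2_join_nK1 n, K1_join_nK2 n}"

end

theory Submission
  imports Defs "HOL-Library.Ramsey"
begin

lemma induced_trans:
  assumes "induced_sub H F" "induced_sub F G" shows "induced_sub H G"
proof -
  obtain f where f: "inj_on f (verts H)" "f ` verts H \<subseteq> verts F"
    "\<forall>x\<in>verts H. \<forall>y\<in>verts H. adj H x y \<longleftrightarrow> adj F (f x) (f y)"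
    using assms(1) unfolding induced_sub_def by blast
  obtain g where g: "inj_on g (verts F)" "g ` verts F \<subseteq> verts G"
    "\<forall>x\<in>verts F. \<forall>y\<in>verts F. adj F x y \<longleftrightarrow> adj G (g x) (g y)"
    using assms(2) unfolding induced_sub_def by blast
  have "inj_on (g \<circ> f) (verts H)"
    using f g by (meson comp_inj_on inj_on_subset)
  moreover have "(g \<circ> f) ` verts H \<subseteq> verts G" using f g by (auto simp: image_subset_iff)
  moreover have "\<forall>x\<in>verts H. \<forall>y\<in>verts H. adj H x y \<longleftrightarrow> adj G ((g\<circ>f) x) ((g\<circ>f) y)"
  proof (intro ballI)
    fix x y assume xy: "x \<in> verts H" "y \<in> verts H"
    then have "f x \<in> verts F" "f y \<in> verts F" using f(2) by auto
    then show "adj H x y \<longleftrightarrow> adj G ((g\<circ>f) x) ((g\<circ>f) y)" using f(3) g(3) xy by simp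
  qed
  ultimately show ?thesis unfolding induced_sub_def by blast
qed

lemma ramsey_pairs:
  "\<exists>N\<ge>K. \<forall>(A::nat set) P. finite A \<longrightarrow> N \<le> card A \<longrightarrow>
     (\<exists>B\<subseteq>A. card B = K \<and> ((\<forall>i\<in>B. \<forall>j\<in>B. i<j \<longrightarrow> P i j) \<or> (\<forall>i\<in>B. \<forall>j\<in>B. i<j \<longrightarrow> \<not> P i j)))"
proof -
  obtain N0 :: nat where "partn_lst {..<N0} [K,K] 2" using ramsey_full[of "[K,K]" 2] by blast
  then have N: "partn_lst {..<max N0 K} [K,K] 2"
    using partn_lst_greater_resource by (meson max.cobounded1)
  define N where "N = max N0 K"
  have "\<exists>B\<subseteq>A. card B = K \<and> ((\<forall>i\<in>B. \<forall>j\<in>B. i<j \<longrightarrow> P i j) \<or> (\<forall>i\<in>B. \<forall>j\<in>B. i<j \<longrightarrow> \<not> P i j))"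
    if A: "finite A" "N \<le> card A" for A :: "nat set" and P
  proof -
    obtain h where h: "bij_betw h {0..<card A} A" using ex_bij_betw_nat_finite A by blast
    have hi: "inj_on h {..<N}" using h A(2)
      by (metis atLeast0LessThan bij_betw_imp_inj_on inj_on_subset lessThan_subset_iff)
    have hA: "h ` {..<N} \<subseteq> A" using h A(2) bij_betw_imp_surj_on by fastforce
    define f where "f X = (if P (Min (h ` X)) (Max (h ` X)) then 0 else (1::nat))" for X
    have "f \<in> nsets {..<N} 2 \<rightarrow> {..<length [K,K]}" by (auto simp: f_def)
    then obtain i H where iH: "i < length [K,K]" "H \<in> nsets {..<N} ([K,K]!i)" "f ` (nsets H 2) \<subseteq> {i}"
      using partn_lstE[OF N[folded N_def]] by blast
    have HK: "H \<subseteq> {..<N}" "finite H" "card H = K" using iH(1,2) by (auto simp: nsets_def less_Suc_eq nth_Cons')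
    have col: "f {a,b} = i" if "a \<in> H" "b \<in> H" "a \<noteq> b" for a b
    proof -
      have "{a,b} \<in> nsets H 2" using that by simp
      then show ?thesis using iH(3) by blast
    qed
    have key: "P x y \<longleftrightarrow> i = 0" if xy: "x \<in> h ` H" "y \<in> h ` H" "x < y" for x y
    proof -
      obtain a b where ab: "a \<in> H" "b \<in> H" "x = h a" "y = h b" using xy by blast
      have "a \<noteq> b" using ab xy by auto
      have "h ` {a,b} = {x,y}" using ab by auto
      then have "Min (h ` {a,b}) = x" "Max (h ` {a,b}) = y" using xy(3) by auto
      then show ?thesis using col[OF ab(1,2) \<open>a\<noteq>b\<close>] unfolding f_def by (auto split: if_splits)
    qed
    have "card (h ` H) = K" using HK hi by (metis card_image inj_on_subset)
    moreover have "h ` H \<subseteq> A" using HK hA by auto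
    moreover have "(\<forall>i\<in>h ` H. \<forall>j\<in>h ` H. i<j \<longrightarrow> P i j) \<or> (\<forall>i\<in>h ` H. \<forall>j\<in>h ` H. i<j \<longrightarrow> \<not> P i j)"
      using key by (cases "i = 0") auto
    ultimately show ?thesis by blast
  qed
  then show ?thesis unfolding N_def by (intro exI[of _ "max N0 K"]) auto
qed

lemma pick_inj:
  assumes "finite B" "n \<le> card B"
  shows "\<exists>h. inj_on h {..<n} \<and> h ` {..<n} \<subseteq> B"
proof -
  obtain h where h: "bij_betw h {0..<card B} B" using ex_bij_betw_nat_finite assms by blast
  have "inj_on h {..<n}" using h assms(2)
    by (metis atLeast0LessThan bij_betw_imp_inj_on inj_on_subset lessThan_subset_iff)
  moreover have "h ` {..<n} \<subseteq> B" using h assms(2) bij_betw_imp_surj_on by fastforce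
  ultimately show ?thesis by blast
qed

lemma graphD:
  assumes "is_graph G"
  shows "adj G x y \<Longrightarrow> x \<in> verts G" "adj G x y \<Longrightarrow> y \<in> verts G"
    "adj G x y \<Longrightarrow> adj G y x" "\<not> adj G x x" "finite (verts G)"
  using assms unfolding is_graph_def by blast+

lemma cg_simps: "verts (complete_graph n) = {0..<n}"
  "adj (complete_graph n) x y \<longleftrightarrow> x < n \<and> y < n \<and> x \<noteq> y"
  by (simp_all add: verts_def adj_def complete_graph_def)
lemma pg_simps: "verts (path_graph n) = {0..<n}"
  "adj (path_graph n) x y \<longleftrightarrow> x < n \<and> y < n \<and> (x = y + 1 \<or> y = x + 1)"
  by (simp_all add: verts_def adj_def path_graph_def)
lemma cb_simps: "verts (complete_bipartite s t) = {0..<s+t}"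
  "adj (complete_bipartite s t) x y \<longleftrightarrow> x < s + t \<and> y < s + t \<and> (x < s \<longleftrightarrow> \<not> y < s)"
  by (simp_all add: verts_def adj_def complete_bipartite_def)
lemma ss_simps: "verts (subdivided_star n) = {0..2*n}"
  "adj (subdivided_star n) x y \<longleftrightarrow> (x = 0 \<and> 1 \<le> y \<and> y \<le> n) \<or> (y = 0 \<and> 1 \<le> x \<and> x \<le> n)
    \<or> (1 \<le> x \<and> x \<le> n \<and> y = x + n) \<or> (1 \<le> y \<and> y \<le> n \<and> x = y + n)"
  by (simp_all add: verts_def adj_def subdivided_star_def)
lemma k2_simps: "verts (K2_join_nK1 n) = {0..<n+2}"
  "adj (K2_join_nK1 n) x y \<longleftrightarrow> x < n + 2 \<and> y < n + 2 \<and> x \<noteq> y \<and> (x < 2 \<or> y < 2)"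
  by (simp_all add: verts_def adj_def K2_join_nK1_def)
lemma k1_simps: "verts (K1_join_nK2 n) = {0..2*n}"
  "adj (K1_join_nK2 n) x y \<longleftrightarrow> x \<le> 2*n \<and> y \<le> 2*n \<and> x \<noteq> y \<and>
      (x = 0 \<or> y = 0 \<or> (x - 1) div 2 = (y - 1) div 2)"
  by (simp_all add: verts_def adj_def K1_join_nK2_def)

lemma emb_K:
  assumes G: "is_graph G" and "\<forall>i<n. g i \<in> verts G"
    and "\<forall>i<n. \<forall>j<n. i \<noteq> j \<longrightarrow> adj G (g i) (g j)"
  shows "induced_sub (complete_graph n) G"
proof -
  have "inj_on g {0..<n}"
    using assms graphD(4)[OF G] by (auto intro!: inj_onI) metis
  then show ?thesis unfolding induced_sub_def cg_simps
    using assms graphD(4)[OF G] by (intro exI[of _ g]) auto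
qed

lemma emb_P:
  assumes "\<forall>i<n. g i \<in> verts G" "inj_on g {..<n}"
    and "\<forall>i<n. \<forall>j<n. adj G (g i) (g j) \<longleftrightarrow> (i = j + 1 \<or> j = i + 1)"
  shows "induced_sub (path_graph n) G"
  unfolding induced_sub_def pg_simps
  using assms by (intro exI[of _ g]) (auto simp: lessThan_atLeast0)

lemma cases3: "(x::nat) < n + 2 \<Longrightarrow> x = 0 \<or> x = 1 \<or> (\<exists>k<n. x = k + 2)"
  by presburger
lemma cases_star: "(x::nat) \<le> 2 * n \<Longrightarrow> x = 0 \<or> (\<exists>k<n. x = k + 1) \<or> (\<exists>k<n. x = k + n + 1)"
  by presburger
lemma cases_fan: "(x::nat) \<le> 2 * n \<Longrightarrow> x = 0 \<or> (\<exists>k<n. x = 2*k + 1) \<or> (\<exists>k<n. x = 2*k + 2)"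
  by presburger

lemma emb_K2:
  assumes G: "is_graph G" and vw: "v \<noteq> w" "v \<in> verts G" "w \<in> verts G"
    and uv: "\<forall>i<n. adj G v (u i) \<and> adj G w (u i)"
    and ui: "\<forall>i<n. \<forall>j<n. \<not> adj G (u i) (u j)" and inj: "inj_on u {..<n}"
  shows "(\<not> adj G v w \<longrightarrow> induced_sub (complete_bipartite 2 n) G)
       \<and> (adj G v w \<longrightarrow> induced_sub (K2_join_nK1 n) G)"
proof -
  note irr = graphD(4)[OF G]
  have uv': "\<forall>i<n. adj G (u i) v \<and> adj G (u i) w" using uv graphD(3)[OF G] by blast
  have uV: "\<forall>i<n. u i \<in> verts G" using uv graphD(2)[OF G] by blast
  have uneq: "\<forall>i<n. u i \<noteq> v \<and> u i \<noteq> w \<and> v \<noteq> u i \<and> w \<noteq> u i" using uv irr by metis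
  define f where "f x = (if x = 0 then v else if x = 1 then w else u (x - 2))" for x
  have fi: "inj_on f {0..<n+2}"
  proof (rule inj_onI)
    fix x y assume xy: "x \<in> {0..<n+2}" "y \<in> {0..<n+2}" "f x = f y"
    have "x < n + 2" "y < n + 2" using xy by auto
    then show "x = y"
      using cases3[OF \<open>x < n+2\<close>] cases3[OF \<open>y < n+2\<close>] xy(3)
      by (elim disjE exE conjE) (use uneq vw(1) inj in \<open>auto simp: f_def inj_on_def\<close>)
  qed
  have fV: "f ` {0..<n+2} \<subseteq> verts G"
    using vw uV cases3 by (auto simp: f_def)
  have ad: "adj G (f x) (f y) \<longleftrightarrow> (if x < 2 \<and> y < 2 then x \<noteq> y \<and> adj G v w else (x < 2 \<longleftrightarrow> \<not> y < 2))"
    if "x < n + 2" "y < n + 2" for x y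
    using cases3[OF that(1)] cases3[OF that(2)]
    by (elim disjE exE conjE) (auto simp: f_def uv uv' ui irr graphD(3)[OF G] dest: graphD(3)[OF G])
  show ?thesis
  proof (intro conjI impI)
    assume "\<not> adj G v w"
    then show "induced_sub (complete_bipartite 2 n) G" unfolding induced_sub_def cb_simps
      using fi fV ad by (intro exI[of _ f]) (auto simp: add.commute)
  next
    assume "adj G v w"
    then show "induced_sub (K2_join_nK1 n) G" unfolding induced_sub_def k2_simps
      using fi fV ad by (intro exI[of _ f]) (auto simp: add.commute)
  qed
qed

lemma emb_star:
  assumes G: "is_graph G" and vV: "v \<in> verts G"
    and a1: "\<forall>i<n. adj G v (u i) \<and> adj G (u i) (w i) \<and> \<not> adj G v (w i) \<and> w i \<noteq> v"
    and a2: "\<forall>i<n. \<forall>j<n. \<not> adj G (u i) (u j) \<and> \<not> adj G (w i) (w j) \<and> (i \<noteq> j \<longrightarrow> \<not> adj G (u i) (w j))"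
    and inj: "inj_on u {..<n}"
  shows "induced_sub (subdivided_star n) G"
proof -
  note irr = graphD(4)[OF G] and sym = graphD(3)[OF G]
  have A1: "\<And>i. i < n \<Longrightarrow> adj G v (u i)" and A2: "\<And>i. i < n \<Longrightarrow> adj G (u i) (w i)"
    and A3: "\<And>i. i < n \<Longrightarrow> \<not> adj G v (w i)" and A4: "\<And>i. i < n \<Longrightarrow> w i \<noteq> v"
    using a1 by blast+
  have B1: "\<And>i j. i < n \<Longrightarrow> j < n \<Longrightarrow> \<not> adj G (u i) (u j)"
    and B2: "\<And>i j. i < n \<Longrightarrow> j < n \<Longrightarrow> \<not> adj G (w i) (w j)"
    and B3: "\<And>i j. i < n \<Longrightarrow> j < n \<Longrightarrow> i \<noteq> j \<Longrightarrow> \<not> adj G (u i) (w j)"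
    using a2 by blast+
  have C1: "\<And>i. i < n \<Longrightarrow> adj G (u i) v" and C2: "\<And>i. i < n \<Longrightarrow> adj G (w i) (u i)"
    and C3: "\<And>i. i < n \<Longrightarrow> \<not> adj G (w i) v"
    using A1 A2 A3 sym by blast+
  have C4: "\<And>i j. i < n \<Longrightarrow> j < n \<Longrightarrow> i \<noteq> j \<Longrightarrow> \<not> adj G (w j) (u i)"
    using B3 sym by blast
  have ne1: "\<And>i j. i < n \<Longrightarrow> j < n \<Longrightarrow> u i \<noteq> w j"
  proof
    fix i j assume "i < n" "j < n" "u i = w j"
    then show False using A1[of i] A3[of j] by simp
  qed
  have ne2: "\<And>i. i < n \<Longrightarrow> u i \<noteq> v"
  proof
    fix i assume "i < n" "u i = v"
    then show False using A1[of i] irr by simp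
  qed
  have winj: "\<And>i j. i < n \<Longrightarrow> j < n \<Longrightarrow> w i = w j \<Longrightarrow> i = j"
  proof (rule ccontr)
    fix i j assume "i < n" "j < n" "w i = w j" "i \<noteq> j"
    then show False using A2[of i] B3[of i j] by simp
  qed
  have uinj: "\<And>i j. i < n \<Longrightarrow> j < n \<Longrightarrow> u i = u j \<Longrightarrow> i = j"
    using inj by (simp add: inj_on_def)
  have uV: "\<And>i. i<n \<Longrightarrow> u i \<in> verts G" "\<And>i. i<n \<Longrightarrow> w i \<in> verts G"
    using A1 A2 graphD(2)[OF G] by blast+
  define f where "f x = (if x = 0 then v else if x \<le> n then u (x - 1) else w (x - n - 1))" for x
  have f1: "f 0 = v" "\<And>k. k < n \<Longrightarrow> f (Suc k) = u k"
     "\<And>k. k < n \<Longrightarrow> f (Suc (k + n)) = w k" by (auto simp: f_def)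
  have D1: "\<And>i j. i < n \<Longrightarrow> j < n \<Longrightarrow> adj G (u i) (w j) \<longleftrightarrow> j = i"
    using A2 B3 by blast
  have D2: "\<And>i j. i < n \<Longrightarrow> j < n \<Longrightarrow> adj G (w j) (u i) \<longleftrightarrow> j = i"
    using D1 sym by blast
  have fi: "inj_on f {0..2*n}"
  proof (rule inj_onI)
    fix x y assume xy: "x \<in> {0..2*n}" "y \<in> {0..2*n}" "f x = f y"
    have "x \<le> 2*n" "y \<le> 2*n" using xy by auto
    then show "x = y"
      using cases_star[OF \<open>x \<le> 2*n\<close>] cases_star[OF \<open>y \<le> 2*n\<close>] xy(3)
      apply (elim disjE exE conjE)
      using f1 ne1 ne2 A4 winj uinj by (simp; metis)+
  qed
  have fV: "f ` {0..2*n} \<subseteq> verts G"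
  proof
    fix z assume "z \<in> f ` {0..2*n}"
    then obtain x where x: "x \<le> 2*n" "z = f x" by auto
    show "z \<in> verts G" using cases_star[OF x(1)] x(2) vV uV f1 by auto
  qed
  have ad: "adj G (f x) (f y) \<longleftrightarrow> adj (subdivided_star n) x y"
    if "x \<le> 2*n" "y \<le> 2*n" for x y
    using cases_star[OF that(1)] cases_star[OF that(2)]
    apply (elim disjE exE conjE)
    by (simp_all add: f1 ss_simps A1 A3 B1 B2 C1 C3 D1 D2 irr)
  show ?thesis unfolding induced_sub_def
    using fi fV ad by (intro exI[of _ f]) (auto simp: ss_simps)
qed

lemma emb_fan:
  assumes G: "is_graph G" and vV: "v \<in> verts G"
    and a1: "\<forall>i<n. adj G v (u i) \<and> adj G v (w i) \<and> adj G (u i) (w i)"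
    and a2: "\<forall>i<n. \<forall>j<n. \<not> adj G (u i) (u j) \<and> \<not> adj G (w i) (w j) \<and> (i \<noteq> j \<longrightarrow> \<not> adj G (u i) (w j))"
    and inj: "inj_on u {..<n}"
  shows "induced_sub (K1_join_nK2 n) G"
proof -
  note irr = graphD(4)[OF G] and sym = graphD(3)[OF G]
  have A1: "\<And>i. i < n \<Longrightarrow> adj G v (u i)" and A2: "\<And>i. i < n \<Longrightarrow> adj G (u i) (w i)"
    and A3: "\<And>i. i < n \<Longrightarrow> adj G v (w i)"
    using a1 by blast+
  have B1: "\<And>i j. i < n \<Longrightarrow> j < n \<Longrightarrow> \<not> adj G (u i) (u j)"
    and B2: "\<And>i j. i < n \<Longrightarrow> j < n \<Longrightarrow> \<not> adj G (w i) (w j)"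
    and B3: "\<And>i j. i < n \<Longrightarrow> j < n \<Longrightarrow> i \<noteq> j \<Longrightarrow> \<not> adj G (u i) (w j)"
    using a2 by blast+
  have C1: "\<And>i. i < n \<Longrightarrow> adj G (u i) v" and C3: "\<And>i. i < n \<Longrightarrow> adj G (w i) v"
    using A1 A3 sym by blast+
  have D1: "\<And>i j. i < n \<Longrightarrow> j < n \<Longrightarrow> adj G (u i) (w j) \<longleftrightarrow> j = i"
    using A2 B3 by blast
  have D2: "\<And>i j. i < n \<Longrightarrow> j < n \<Longrightarrow> adj G (w j) (u i) \<longleftrightarrow> j = i"
    using D1 sym by blast
  have ne1: "\<And>i j. i < n \<Longrightarrow> j < n \<Longrightarrow> u i \<noteq> w j"
  proof
    fix i j assume ij: "i < n" "j < n" "u i = w j"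
    show False
    proof (cases "i = j")
      case True then show False using ij A2[of i] irr by simp
    next
      case False then show False using ij A2[of j] B1[of j i] sym by metis
    qed
  qed
  have ne2: "\<And>i. i < n \<Longrightarrow> u i \<noteq> v" "\<And>i. i < n \<Longrightarrow> w i \<noteq> v"
    using A1 A3 irr by metis+
  have winj: "\<And>i j. i < n \<Longrightarrow> j < n \<Longrightarrow> w i = w j \<Longrightarrow> i = j"
  proof (rule ccontr)
    fix i j assume "i < n" "j < n" "w i = w j" "i \<noteq> j"
    then show False using A2[of i] B3[of i j] by simp
  qed
  have uinj: "\<And>i j. i < n \<Longrightarrow> j < n \<Longrightarrow> u i = u j \<Longrightarrow> i = j"
    using inj by (simp add: inj_on_def)
  have uV: "\<And>i. i<n \<Longrightarrow> u i \<in> verts G" "\<And>i. i<n \<Longrightarrow> w i \<in> verts G"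
    using A1 A3 graphD(2)[OF G] by blast+
  define f where "f x = (if x = 0 then v else if odd x then u ((x - 1) div 2) else w ((x - 1) div 2))" for x
  have f1: "f 0 = v" "\<And>k. f (Suc (2*k)) = u k" "\<And>k. f (Suc (Suc (2*k))) = w k" by (auto simp: f_def)
  have fi: "inj_on f {0..2*n}"
  proof (rule inj_onI)
    fix x y assume xy: "x \<in> {0..2*n}" "y \<in> {0..2*n}" "f x = f y"
    have "x \<le> 2*n" "y \<le> 2*n" using xy by auto
    then show "x = y"
      using cases_fan[OF \<open>x \<le> 2*n\<close>] cases_fan[OF \<open>y \<le> 2*n\<close>] xy(3)
      apply (elim disjE exE conjE)
      using f1 ne1 ne2 winj uinj by (simp; metis)+
  qed
  have fV: "f ` {0..2*n} \<subseteq> verts G"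
  proof
    fix z assume "z \<in> f ` {0..2*n}"
    then obtain x where x: "x \<le> 2*n" "z = f x" by auto
    show "z \<in> verts G" using cases_fan[OF x(1)] x(2) vV uV f1 by auto
  qed
  have ad: "adj G (f x) (f y) \<longleftrightarrow> adj (K1_join_nK2 n) x y"
    if "x \<le> 2*n" "y \<le> 2*n" for x y
    using cases_fan[OF that(1)] cases_fan[OF that(2)] that
    apply (elim disjE exE conjE)
    apply (simp_all add: f1 k1_simps A1 A3 B1 B2 C1 C3 D1 D2 irr)
    by presburger+
  show ?thesis unfolding induced_sub_def
    using fi fV ad by (intro exI[of _ f]) (auto simp: k1_simps)
qed

lemma rtranclp_sym:
  assumes "r\<^sup>*\<^sup>* a b" "\<And>x y. r x y \<Longrightarrow> r y x" shows "r\<^sup>*\<^sup>* b a"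
  using assms(1)
proof (induction rule: rtranclp_induct)
  case base then show ?case by simp
next
  case (step y z) then show ?case using assms(2) by (meson converse_rtranclp_into_rtranclp)
qed

lemma conn_center:
  assumes "is_graph G" "c \<in> verts G" "\<forall>x\<in>verts G. (adj G)\<^sup>*\<^sup>* x c"
  shows "connected G"
  unfolding connected_def
proof (intro conjI ballI)
  show "verts G \<noteq> {}" using assms by auto
  fix x y assume "x \<in> verts G" "y \<in> verts G"
  then have "(adj G)\<^sup>*\<^sup>* x c" "(adj G)\<^sup>*\<^sup>* c y"
    using assms rtranclp_sym[of "adj G" y c] graphD(3)[OF assms(1)] by auto
  then show "(adj G)\<^sup>*\<^sup>* x y" by simp
qed

lemma deg2:
  assumes "finite (verts G)" "a \<in> verts G" "b \<in> verts G" "a \<noteq> b" "adj G x a" "adj G x b"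
  shows "2 \<le> degree G x"
proof -
  have "{a,b} \<subseteq> {u \<in> verts G. adj G x u}" using assms by auto
  then have "card {a,b} \<le> degree G x" unfolding degree_def using assms(1) by (intro card_mono) auto
  then show ?thesis using assms(4) by simp
qed

lemma card_deg2:
  assumes "finite (verts G)" "S \<subseteq> verts G"
    "\<And>x. x \<in> S \<Longrightarrow> \<exists>a b. a \<in> verts G \<and> b \<in> verts G \<and> a \<noteq> b \<and> adj G x a \<and> adj G x b"
  shows "card S \<le> card {v \<in> verts G. 2 \<le> degree G v}"
proof (rule card_mono)
  show "finite {v \<in> verts G. 2 \<le> degree G v}" using assms(1) by simp
  show "S \<subseteq> {v \<in> verts G. 2 \<le> degree G v}"
    using assms deg2[OF assms(1)] by blast
qed

lemma center_reach: "\<forall>x\<in>verts G. x \<noteq> c \<longrightarrow> adj G x c \<Longrightarrow> \<forall>x\<in>verts G. (adj G)\<^sup>*\<^sup>* x c"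
  by (metis r_into_rtranclp rtranclp.rtrancl_refl)

definition good_fam :: "nat graph \<Rightarrow> nat \<Rightarrow> bool" where
  "good_fam F n \<longleftrightarrow> is_graph F \<and> connected F \<and> n - 2 \<le> card {v \<in> verts F. 2 \<le> degree F v}"

lemma good_K: assumes "n > 0" shows "good_fam (complete_graph n) n"
proof -
  have g: "is_graph (complete_graph n)" unfolding is_graph_def cg_simps by auto
  have c: "connected (complete_graph n)"
    by (rule conn_center[OF g, of 0], simp add: cg_simps assms, rule center_reach, auto simp: cg_simps)
  have "card {0..<n-2} \<le> card {v \<in> verts (complete_graph n). 2 \<le> degree (complete_graph n) v}"
  proof (rule card_deg2)
    fix x assume "x \<in> {0..<n-2}"
    then show "\<exists>a b. a \<in> verts (complete_graph n) \<and> b \<in> verts (complete_graph n) \<and> a \<noteq> b \<and>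
      adj (complete_graph n) x a \<and> adj (complete_graph n) x b"
      by (intro exI[of _ "n-1"] exI[of _ "n-2"]) (auto simp: cg_simps)
  qed (auto simp: cg_simps)
  then show ?thesis using g c unfolding good_fam_def by simp
qed

lemma good_P: assumes "n > 0" shows "good_fam (path_graph n) n"
proof -
  have g: "is_graph (path_graph n)" unfolding is_graph_def pg_simps by auto
  have r: "(adj (path_graph n))\<^sup>*\<^sup>* x 0" if "x < n" for x
    using that
  proof (induction x)
    case 0 then show ?case by simp
  next
    case (Suc x)
    then have "adj (path_graph n) (Suc x) x" by (simp add: pg_simps)
    then show ?case using Suc by (meson Suc_lessD converse_rtranclp_into_rtranclp)
  qed
  have c: "connected (path_graph n)"
    by (rule conn_center[OF g, of 0]) (use assms r in \<open>auto simp: pg_simps\<close>)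
  have "card {1..<n-1} \<le> card {v \<in> verts (path_graph n). 2 \<le> degree (path_graph n) v}"
  proof (rule card_deg2)
    fix x assume "x \<in> {1..<n-1}"
    then show "\<exists>a b. a \<in> verts (path_graph n) \<and> b \<in> verts (path_graph n) \<and> a \<noteq> b \<and>
      adj (path_graph n) x a \<and> adj (path_graph n) x b"
      by (intro exI[of _ "x-1"] exI[of _ "x+1"]) (auto simp: pg_simps)
  qed (auto simp: pg_simps)
  then show ?thesis using g c unfolding good_fam_def by simp
qed

lemma good_S: assumes "n > 0" shows "good_fam (subdivided_star n) n"
proof -
  have g: "is_graph (subdivided_star n)" unfolding is_graph_def ss_simps by auto
  have r: "(adj (subdivided_star n))\<^sup>*\<^sup>* x 0" if "x \<le> 2*n" for x
  proof -
    consider "x = 0" | "1 \<le> x \<and> x \<le> n" | "n < x" by linarith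
    then show ?thesis
    proof cases
      case 2 then show ?thesis by (intro r_into_rtranclp) (auto simp: ss_simps)
    next
      case 3
      then have "adj (subdivided_star n) x (x - n)" "adj (subdivided_star n) (x - n) 0"
        using that by (auto simp: ss_simps)
      then show ?thesis by (meson converse_rtranclp_into_rtranclp r_into_rtranclp)
    qed simp
  qed
  have c: "connected (subdivided_star n)"
    by (rule conn_center[OF g, of 0]) (use assms r in \<open>auto simp: ss_simps\<close>)
  have "card {1..n} \<le> card {v \<in> verts (subdivided_star n). 2 \<le> degree (subdivided_star n) v}"
  proof (rule card_deg2)
    fix x assume "x \<in> {1..n}"
    then show "\<exists>a b. a \<in> verts (subdivided_star n) \<and> b \<in> verts (subdivided_star n) \<and> a \<noteq> b \<and>
      adj (subdivided_star n) x a \<and> adj (subdivided_star n) x b"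
      by (intro exI[of _ "0"] exI[of _ "x+n"]) (auto simp: ss_simps)
  qed (auto simp: ss_simps)
  then show ?thesis using g c unfolding good_fam_def by simp
qed

lemma good_B: assumes "n > 0" shows "good_fam (complete_bipartite 2 n) n"
proof -
  have g: "is_graph (complete_bipartite 2 n)" unfolding is_graph_def cb_simps by auto
  have r: "(adj (complete_bipartite 2 n))\<^sup>*\<^sup>* x 0" if "x < 2 + n" for x
  proof -
    consider "x = 0" | "x = 1" | "2 \<le> x" by linarith
    then show ?thesis
    proof cases
      case 3 then show ?thesis using that by (intro r_into_rtranclp) (auto simp: cb_simps)
    next
      case 2
      then have "adj (complete_bipartite 2 n) x 2" "adj (complete_bipartite 2 n) 2 0"
        using assms by (auto simp: cb_simps)
      then show ?thesis by (meson converse_rtranclp_into_rtranclp r_into_rtranclp)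
    qed simp
  qed
  have c: "connected (complete_bipartite 2 n)"
    by (rule conn_center[OF g, of 0]) (use assms r in \<open>auto simp: cb_simps\<close>)
  have "card {2..<n+2} \<le> card {v \<in> verts (complete_bipartite 2 n). 2 \<le> degree (complete_bipartite 2 n) v}"
  proof (rule card_deg2)
    fix x assume "x \<in> {2..<n+2}"
    then show "\<exists>a b. a \<in> verts (complete_bipartite 2 n) \<and> b \<in> verts (complete_bipartite 2 n) \<and> a \<noteq> b \<and>
      adj (complete_bipartite 2 n) x a \<and> adj (complete_bipartite 2 n) x b"
      by (intro exI[of _ "0"] exI[of _ "1"]) (auto simp: cb_simps)
  qed (auto simp: cb_simps)
  then show ?thesis using g c unfolding good_fam_def by simp
qed

lemma good_K2: assumes "n > 0" shows "good_fam (K2_join_nK1 n) n"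
proof -
  have g: "is_graph (K2_join_nK1 n)" unfolding is_graph_def k2_simps by auto
  have c: "connected (K2_join_nK1 n)"
    by (rule conn_center[OF g, of 0], simp add: k2_simps assms, rule center_reach, auto simp: k2_simps)
  have "card {2..<n+2} \<le> card {v \<in> verts (K2_join_nK1 n). 2 \<le> degree (K2_join_nK1 n) v}"
  proof (rule card_deg2)
    fix x assume "x \<in> {2..<n+2}"
    then show "\<exists>a b. a \<in> verts (K2_join_nK1 n) \<and> b \<in> verts (K2_join_nK1 n) \<and> a \<noteq> b \<and>
      adj (K2_join_nK1 n) x a \<and> adj (K2_join_nK1 n) x b"
      by (intro exI[of _ "0"] exI[of _ "1"]) (auto simp: k2_simps)
  qed (auto simp: k2_simps)
  then show ?thesis using g c unfolding good_fam_def by simp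
qed

lemma good_K1: assumes "n > 0" shows "good_fam (K1_join_nK2 n) n"
proof -
  have g: "is_graph (K1_join_nK2 n)" unfolding is_graph_def k1_simps by auto
  have c: "connected (K1_join_nK2 n)"
    by (rule conn_center[OF g, of 0], simp add: k1_simps assms, rule center_reach, auto simp: k1_simps)
  have "card {1..n} \<le> card {v \<in> verts (K1_join_nK2 n). 2 \<le> degree (K1_join_nK2 n) v}"
  proof (rule card_deg2)
    fix x assume x: "x \<in> {1..n}"
    define p where "p = (if odd x then x + 1 else x - 1)"
    have "p \<le> 2*n" "p \<noteq> 0" "p \<noteq> x" "(x - 1) div 2 = (p - 1) div 2"
      using x unfolding p_def by (auto; presburger)+
    then show "\<exists>a b. a \<in> verts (K1_join_nK2 n) \<and> b \<in> verts (K1_join_nK2 n) \<and> a \<noteq> b \<and>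
      adj (K1_join_nK2 n) x a \<and> adj (K1_join_nK2 n) x b"
      using x by (intro exI[of _ "0"] exI[of _ p]) (auto simp: k1_simps)
  qed (auto simp: k1_simps)
  then show ?thesis using g c unfolding good_fam_def by simp
qed

lemma good_all: assumes "n > 0" "F \<in> unavoidable_family n" shows "good_fam F n"
  using assms good_K good_P good_S good_B good_K2 good_K1
  unfolding unavoidable_family_def by auto

primrec bfs :: "'a graph \<Rightarrow> 'a set \<Rightarrow> 'a \<Rightarrow> nat \<Rightarrow> 'a set" where
  "bfs G D r 0 = {r}"
| "bfs G D r (Suc k) = bfs G D r k \<union> {y \<in> D. \<exists>x\<in>bfs G D r k. adj G x y}"

lemma bfs_sub: "r \<in> D \<Longrightarrow> bfs G D r k \<subseteq> D"
  by (induction k) auto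

lemma bfs_mono: "k \<le> m \<Longrightarrow> bfs G D r k \<subseteq> bfs G D r m"
proof (induction m)
  case 0 then show ?case by simp
next
  case (Suc m) then show ?case by (auto simp: le_Suc_eq)
qed

lemma bfs_card:
  assumes "finite D" "r \<in> D" "\<forall>x\<in>D. card {y \<in> D. adj G x y} \<le> d"
  shows "card (bfs G D r k) \<le> (d+1)^k"
proof (induction k)
  case 0 then show ?case by simp
next
  case (Suc k)
  let ?B = "bfs G D r k"
  have fB: "finite ?B" using bfs_sub[OF assms(2)] assms(1) finite_subset by blast
  have eq: "bfs G D r (Suc k) = ?B \<union> (\<Union>x\<in>?B. {y \<in> D. adj G x y})" by auto
  have "card (\<Union>x\<in>?B. {y \<in> D. adj G x y}) \<le> (\<Sum>x\<in>?B. card {y \<in> D. adj G x y})"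
    by (rule card_UN_le[OF fB])
  also have "\<dots> \<le> (\<Sum>x\<in>?B. d)"
    by (rule sum_mono) (use assms(3) bfs_sub[OF assms(2)] in blast)
  also have "\<dots> = card ?B * d" by simp
  finally have "card (bfs G D r (Suc k)) \<le> card ?B + card ?B * d"
    unfolding eq by (meson add_left_mono card_Un_le order_trans)
  also have "\<dots> = card ?B * (d+1)" by simp
  also have "\<dots> \<le> (d+1)^k * (d+1)" using Suc by (intro mult_right_mono) auto
  finally show ?case by (simp add: mult.commute)
qed

lemma bfs_closed:
  assumes "bfs G D r (Suc k) \<subseteq> bfs G D r k"
    and "(\<lambda>a b. adj G a b \<and> a \<in> D \<and> b \<in> D)\<^sup>*\<^sup>* r y"
  shows "y \<in> bfs G D r k"
  using assms(2)
proof (induction rule: rtranclp_induct)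
  case base
  have "r \<in> bfs G D r 0" by simp
  then show ?case using bfs_mono[of 0 k G D r] by blast
next
  case (step y z)
  then have "z \<in> bfs G D r (Suc k)" by auto
  then show ?case using assms(1) by blast
qed

lemma bfs_path:
  assumes "r \<in> D"
  shows "y \<in> bfs G D r k \<and> (0 < k \<longrightarrow> y \<notin> bfs G D r (k-1)) \<Longrightarrow>
    \<exists>f. f k = y \<and> (\<forall>i\<le>k. f i \<in> bfs G D r i \<and> (0 < i \<longrightarrow> f i \<notin> bfs G D r (i-1)))
       \<and> (\<forall>i<k. adj G (f i) (f (Suc i)))"
proof (induction k arbitrary: y)
  case 0 then show ?case by (intro exI[of _ "\<lambda>_. y"]) simp
next
  case (Suc k)
  then have y: "y \<in> D" "\<exists>x\<in>bfs G D r k. adj G x y" "y \<notin> bfs G D r k" by auto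
  then obtain x where x: "x \<in> bfs G D r k" "adj G x y" by blast
  have "0 < k \<longrightarrow> x \<notin> bfs G D r (k-1)"
  proof
    assume "0 < k"
    show "x \<notin> bfs G D r (k-1)"
    proof
      assume "x \<in> bfs G D r (k-1)"
      then have "y \<in> bfs G D r (Suc (k-1))" using y x by auto
      then show False using y(3) \<open>0<k\<close> by simp
    qed
  qed
  then obtain f where f: "f k = x" "\<forall>i\<le>k. f i \<in> bfs G D r i \<and> (0 < i \<longrightarrow> f i \<notin> bfs G D r (i-1))"
    "\<forall>i<k. adj G (f i) (f (Suc i))" using Suc.IH x by blast
  show ?case
    apply (intro exI[of _ "f(Suc k := y)"])
    using f Suc.prems x by (auto simp: le_Suc_eq less_Suc_eq)
qed

lemma path_from_bfs:
  assumes G: "is_graph G" and rD: "r \<in> D" and DV: "D \<subseteq> verts G"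
    and f: "\<forall>i\<le>k. f i \<in> bfs G D r i \<and> (0 < i \<longrightarrow> f i \<notin> bfs G D r (i-1))"
       "\<forall>i<k. adj G (f i) (f (Suc i))"
    and n: "n \<le> Suc k"
  shows "induced_sub (path_graph n) G"
proof (rule emb_P)
  have fD: "f i \<in> D" if "i \<le> k" for i using f(1) that bfs_sub[OF rD] by blast
  show "\<forall>i<n. f i \<in> verts G" using fD DV n by auto
  have noadj: "\<not> adj G (f i) (f j)" if "i + 1 < j" "j \<le> k" for i j
  proof
    assume a: "adj G (f i) (f j)"
    have "f j \<in> bfs G D r (Suc i)" using a f(1) that fD[of j] by auto
    moreover have "Suc i \<le> j - 1" using that by simp
    ultimately have "f j \<in> bfs G D r (j - 1)" using bfs_mono[of "Suc i" "j-1" G D r] by blast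
    then show False using f(1) that by auto
  qed
  have neq: "f i \<noteq> f j" if "i < j" "j \<le> k" for i j
  proof
    assume e: "f i = f j"
    have "i \<le> j - 1" using that by simp
    then have sub: "bfs G D r i \<subseteq> bfs G D r (j-1)" by (rule bfs_mono)
    have "f i \<in> bfs G D r i" using f(1) that by simp
    then have "f j \<in> bfs G D r (j-1)" using sub e by auto
    moreover have "f j \<notin> bfs G D r (j-1)" using f(1) that by simp
    ultimately show False by blast
  qed
  show "inj_on f {..<n}"
  proof (rule inj_onI)
    fix i j assume ij: "i \<in> {..<n}" "j \<in> {..<n}" "f i = f j"
    then have "i \<le> k" "j \<le> k" using n by auto
    then show "i = j" using neq[of i j] neq[of j i] ij(3) by (metis linorder_neqE_nat)
  qed
  show "\<forall>i<n. \<forall>j<n. adj G (f i) (f j) \<longleftrightarrow> (i = j + 1 \<or> j = i + 1)"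
  proof (intro allI impI)
    fix i j assume ij: "i < n" "j < n"
    then have ik: "i \<le> k" "j \<le> k" using n by auto
    consider "i + 1 < j" | "j + 1 < i" | "i = j" | "j = i + 1" | "i = j + 1" by linarith
    then show "adj G (f i) (f j) \<longleftrightarrow> (i = j + 1 \<or> j = i + 1)"
    proof cases
      case 1 then show ?thesis using noadj ik by auto
    next
      case 2 then show ?thesis using noadj[of j i] ik graphD(3)[OF G] by auto
    next
      case 3 then show ?thesis using graphD(4)[OF G] by auto
    next
      case 4 then show ?thesis using f(2) ik by auto
    next
      case 5 then show ?thesis using f(2) ik graphD(3)[OF G] by auto
    qed
  qed
qed

lemma bfs_bound:
  assumes G: "is_graph G" and fD: "finite D" and DV: "D \<subseteq> verts G" and rD: "r \<in> D"
    and conn: "\<forall>y\<in>D. (\<lambda>a b. adj G a b \<and> a \<in> D \<and> b \<in> D)\<^sup>*\<^sup>* r y"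
    and deg: "\<forall>x\<in>D. card {y \<in> D. adj G x y} \<le> d"
    and noP: "\<not> induced_sub (path_graph n) G"
  shows "card D \<le> (d+1)^n"
proof (cases "bfs G D r (Suc n) \<subseteq> bfs G D r n")
  case True
  have "D \<subseteq> bfs G D r n"
  proof
    fix y assume "y \<in> D"
    then have "(\<lambda>a b. adj G a b \<and> a \<in> D \<and> b \<in> D)\<^sup>*\<^sup>* r y" using conn by simp
    then show "y \<in> bfs G D r n" by (rule bfs_closed[OF True])
  qed
  then have "card D \<le> card (bfs G D r n)"
    by (rule card_mono[OF finite_subset[OF bfs_sub[OF rD] fD]])
  also have "\<dots> \<le> (d+1)^n" by (rule bfs_card[OF fD rD deg])
  finally show ?thesis .
next
  case False
  then obtain y where "y \<in> bfs G D r (Suc n)" "y \<notin> bfs G D r n" by blast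
  then have "y \<in> bfs G D r (Suc n) \<and> (0 < Suc n \<longrightarrow> y \<notin> bfs G D r (Suc n - 1))" by simp
  from bfs_path[OF rD this] obtain f where
    f: "f (Suc n) = y" "\<forall>i\<le>Suc n. f i \<in> bfs G D r i \<and> (0 < i \<longrightarrow> f i \<notin> bfs G D r (i-1))"
       "\<forall>i<Suc n. adj G (f i) (f (Suc i))" by blast
  have "n \<le> Suc (Suc n)" by simp
  have "induced_sub (path_graph n) G"
    by (rule path_from_bfs[OF G rD DV f(2) f(3) \<open>n \<le> Suc (Suc n)\<close>])
  then show ?thesis using noP by blast
qed

definition Dset :: "'a graph \<Rightarrow> 'a set" where
  "Dset G = {v \<in> verts G. 2 \<le> degree G v}"

lemma D_conn:
  assumes G: "is_graph G" and c: "connected G" and x: "x \<in> Dset G" and y: "y \<in> Dset G"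
  shows "(\<lambda>a b. adj G a b \<and> a \<in> Dset G \<and> b \<in> Dset G)\<^sup>*\<^sup>* x y"
proof -
  let ?D = "Dset G"
  let ?a = "\<lambda>a b. adj G a b \<and> a \<in> ?D \<and> b \<in> ?D"
  have leaf: "p = q" if "z \<in> verts G" "z \<notin> ?D" "adj G z p" "adj G z q" for z p q
  proof -
    have fin: "finite {u \<in> verts G. adj G z u}" using graphD(5)[OF G] by simp
    have "card {u \<in> verts G. adj G z u} \<le> Suc 0" using that unfolding Dset_def degree_def by simp
    then show ?thesis using card_le_Suc0_iff_eq[OF fin] that graphD(2)[OF G] by blast
  qed
  have xy: "(adj G)\<^sup>*\<^sup>* x y" using c x y unfolding connected_def Dset_def by blast
  have "(z \<in> ?D \<and> ?a\<^sup>*\<^sup>* x z) \<or> (z \<notin> ?D \<and> (\<exists>p\<in>?D. adj G z p \<and> ?a\<^sup>*\<^sup>* x p))"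
    if "(adj G)\<^sup>*\<^sup>* x z" for z
    using that
  proof (induction rule: rtranclp_induct)
    case base then show ?case using x by simp
  next
    case (step z z')
    show ?case
    proof (cases "z \<in> ?D")
      case True
      then have az: "?a\<^sup>*\<^sup>* x z" using step by auto
      show ?thesis
      proof (cases "z' \<in> ?D")
        case True then show ?thesis using az step(2) \<open>z \<in> ?D\<close> by (auto intro: rtranclp.rtrancl_into_rtrancl)
      next
        case False then show ?thesis using az step(2) \<open>z \<in> ?D\<close> graphD(3)[OF G] by blast
      qed
    next
      case False
      then obtain p where p: "p \<in> ?D" "adj G z p" "?a\<^sup>*\<^sup>* x p" using step by auto
      have "z' = p" using leaf[OF graphD(1)[OF G step(2)] False step(2) p(2)] .
      then show ?thesis using p by auto
    qed
  qed
  then show ?thesis using xy y by blast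
qed

definition RP :: "nat \<Rightarrow> nat \<Rightarrow> bool" where
  "RP K N \<longleftrightarrow> (\<forall>(A::nat set) P. finite A \<longrightarrow> N \<le> card A \<longrightarrow>
     (\<exists>B\<subseteq>A. card B = K \<and> ((\<forall>i\<in>B. \<forall>j\<in>B. i<j \<longrightarrow> P i j) \<or> (\<forall>i\<in>B. \<forall>j\<in>B. i<j \<longrightarrow> \<not> P i j))))"

lemma RP_ex: "\<exists>N\<ge>K. RP K N"
  unfolding RP_def by (rule ramsey_pairs)

lemma RP_use:
  fixes A :: "nat set" and P :: "nat \<Rightarrow> nat \<Rightarrow> bool"
  assumes "RP K N" "finite A" "N \<le> card A"
  obtains B where "B \<subseteq> A" "card B = K"
    "(\<forall>i\<in>B. \<forall>j\<in>B. i<j \<longrightarrow> P i j) \<or> (\<forall>i\<in>B. \<forall>j\<in>B. i<j \<longrightarrow> \<not> P i j)"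
proof -
  have "\<exists>B\<subseteq>A. card B = K \<and> ((\<forall>i\<in>B. \<forall>j\<in>B. i<j \<longrightarrow> P i j) \<or> (\<forall>i\<in>B. \<forall>j\<in>B. i<j \<longrightarrow> \<not> P i j))"
    using assms(1)[unfolded RP_def, rule_format, where A=A and P=P, OF assms(2,3)] .
  then show ?thesis using that by blast
qed

lemma winK:
  assumes G: "is_graph G" and B: "finite B" "n \<le> card B"
    and gV: "\<forall>i\<in>B. g i \<in> verts G" and ga: "\<forall>i\<in>B. \<forall>j\<in>B. i \<noteq> j \<longrightarrow> adj G (g i) (g j)"
  shows "\<exists>F\<in>unavoidable_family n. induced_sub F G"
proof -
  obtain h where h: "inj_on h {..<n}" "h ` {..<n} \<subseteq> B" using pick_inj[OF B] by blast
  have "induced_sub (complete_graph n) G"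
  proof (rule emb_K[OF G, of n "g \<circ> h"])
    show "\<forall>i<n. (g \<circ> h) i \<in> verts G" using h gV by auto
    show "\<forall>i<n. \<forall>j<n. i \<noteq> j \<longrightarrow> adj G ((g \<circ> h) i) ((g \<circ> h) j)"
    proof (intro allI impI)
      fix i j assume ij: "i < n" "j < n" "i \<noteq> j"
      then have "h i \<in> B" "h j \<in> B" "h i \<noteq> h j" using h by (auto simp: inj_on_def)
      then show "adj G ((g \<circ> h) i) ((g \<circ> h) j)" using ga by simp
    qed
  qed
  then show ?thesis unfolding unavoidable_family_def by blast
qed

lemma win2:
  assumes G: "is_graph G" and B: "finite B" "n \<le> card B"
    and vx: "v \<in> verts G" "x \<in> verts G" "x \<noteq> v"
    and a: "\<forall>j\<in>B. adj G v (u j) \<and> adj G x (u j)"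
    and ind: "\<forall>i\<in>B. \<forall>j\<in>B. \<not> adj G (u i) (u j)" and inj: "inj_on u B"
  shows "\<exists>F\<in>unavoidable_family n. induced_sub F G"
proof -
  obtain h where h: "inj_on h {..<n}" "h ` {..<n} \<subseteq> B" using pick_inj[OF B] by blast
  have "inj_on (u \<circ> h) {..<n}" using h inj by (meson comp_inj_on inj_on_subset)
  have hB: "\<And>i. i < n \<Longrightarrow> h i \<in> B" using h by auto
  have c1: "\<forall>i<n. adj G v ((u \<circ> h) i) \<and> adj G x ((u \<circ> h) i)" using hB a by simp
  have c2: "\<forall>i<n. \<forall>j<n. \<not> adj G ((u \<circ> h) i) ((u \<circ> h) j)" using hB ind by simp
  have "(\<not> adj G v x \<longrightarrow> induced_sub (complete_bipartite 2 n) G)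
       \<and> (adj G v x \<longrightarrow> induced_sub (K2_join_nK1 n) G)"
    by (rule emb_K2[OF G vx(3)[symmetric] vx(1) vx(2) c1 c2 \<open>inj_on (u \<circ> h) {..<n}\<close>])
  then show ?thesis unfolding unavoidable_family_def by (cases "adj G v x") auto
qed

lemma winSF:
  assumes G: "is_graph G" and B: "finite B" "n \<le> card B" and vV: "v \<in> verts G"
    and a1: "\<forall>i\<in>B. adj G v (u i) \<and> adj G (u i) (w i) \<and> w i \<noteq> v \<and> adj G v (w i) = t"
    and a2: "\<forall>i\<in>B. \<forall>j\<in>B. \<not> adj G (u i) (u j) \<and> \<not> adj G (w i) (w j) \<and> (i \<noteq> j \<longrightarrow> \<not> adj G (u i) (w j))"
    and inj: "inj_on u B"
  shows "\<exists>F\<in>unavoidable_family n. induced_sub F G"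
proof -
  obtain h where h: "inj_on h {..<n}" "h ` {..<n} \<subseteq> B" using pick_inj[OF B] by blast
  have i2: "inj_on (u \<circ> h) {..<n}" using h inj by (meson comp_inj_on inj_on_subset)
  have hB: "\<forall>i<n. h i \<in> B" using h by auto
  have hne: "\<forall>i<n. \<forall>j<n. i \<noteq> j \<longrightarrow> h i \<noteq> h j" using h(1) by (auto simp: inj_on_def)
  show ?thesis
  proof (cases t)
    case False
    have "induced_sub (subdivided_star n) G"
    proof (rule emb_star[OF G vV _ _ i2, of "w \<circ> h"])
      show "\<forall>i<n. adj G v ((u \<circ> h) i) \<and> adj G ((u \<circ> h) i) ((w \<circ> h) i) \<and> \<not> adj G v ((w \<circ> h) i) \<and> (w \<circ> h) i \<noteq> v"
        using a1 hB False by simp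
      show "\<forall>i<n. \<forall>j<n. \<not> adj G ((u \<circ> h) i) ((u \<circ> h) j) \<and> \<not> adj G ((w \<circ> h) i) ((w \<circ> h) j) \<and>
          (i \<noteq> j \<longrightarrow> \<not> adj G ((u \<circ> h) i) ((w \<circ> h) j))"
        using a2 hB hne by simp
    qed
    then show ?thesis unfolding unavoidable_family_def by blast
  next
    case True
    have "induced_sub (K1_join_nK2 n) G"
    proof (rule emb_fan[OF G vV _ _ i2, of "w \<circ> h"])
      show "\<forall>i<n. adj G v ((u \<circ> h) i) \<and> adj G v ((w \<circ> h) i) \<and> adj G ((u \<circ> h) i) ((w \<circ> h) i)"
        using a1 hB True by simp
      show "\<forall>i<n. \<forall>j<n. \<not> adj G ((u \<circ> h) i) ((u \<circ> h) j) \<and> \<not> adj G ((w \<circ> h) i) ((w \<circ> h) j) \<and>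
          (i \<noteq> j \<longrightarrow> \<not> adj G ((u \<circ> h) i) ((w \<circ> h) j))"
        using a2 hB hne by simp
    qed
    then show ?thesis unfolding unavoidable_family_def by blast
  qed
qed

lemma homog_sym:
  fixes B :: "nat set"
  assumes "\<forall>i\<in>B. \<forall>j\<in>B. i<j \<longrightarrow> R i j" "\<And>i j. R i j \<Longrightarrow> R j i"
  shows "\<forall>i\<in>B. \<forall>j\<in>B. i \<noteq> j \<longrightarrow> R i j"
proof (intro ballI impI)
  fix i j assume ij: "i \<in> B" "j \<in> B" "i \<noteq> j"
  show "R i j"
  proof (cases "i < j")
    case True then show ?thesis using assms(1) ij by blast
  next
    case False then have "j < i" using ij(3) by simp
    then have "R j i" using assms(1) ij by blast
    then show ?thesis by (rule assms(2))
  qed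
qed

lemma homog_neg:
  fixes B :: "nat set"
  assumes "\<forall>i\<in>B. \<forall>j\<in>B. i<j \<longrightarrow> \<not> R i j" "\<And>i j. R i j \<Longrightarrow> R j i" "\<And>i. \<not> R i i"
  shows "\<forall>i\<in>B. \<forall>j\<in>B. \<not> R i j"
proof (intro ballI)
  fix i j assume ij: "i \<in> B" "j \<in> B"
  consider "i < j" | "j < i" | "i = j" by linarith
  then show "\<not> R i j"
  proof cases
    case 1 then show ?thesis using assms(1) ij by blast
  next
    case 2 then have "\<not> R j i" using assms(1) ij by blast
    then show ?thesis using assms(2) by blast
  next
    case 3 then show ?thesis using assms(3) by simp
  qed
qed

lemma ramsey_chain:
  assumes n: "n > 0"
  shows "\<exists>N0\<ge>1. \<forall>(G::'a graph) v. is_graph G \<longrightarrow> v \<in> verts G \<longrightarrow>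
     N0 \<le> card {y \<in> Dset G. adj G v y} \<longrightarrow> (\<exists>F\<in>unavoidable_family n. induced_sub F G)"
proof -
  obtain N5 where N5: "N5 \<ge> n" "RP n N5" using RP_ex by blast
  obtain N4 where N4: "N4 \<ge> N5" "RP N5 N4" using RP_ex by blast
  obtain N3 where N3: "N3 \<ge> N4" "RP N4 N3" using RP_ex by blast
  obtain N1 where N1: "N1 \<ge> 2*N3+n" "RP (2*N3+n) N1" using RP_ex by blast
  have "N1 \<ge> 1" using n N1 by simp
  moreover have "\<exists>F\<in>unavoidable_family n. induced_sub F G"
    if G: "is_graph G" and vV: "v \<in> verts G" and cU: "N1 \<le> card {y \<in> Dset G. adj G v y}"
    for G :: "'a graph" and v
  proof -
    note irr = graphD(4)[OF G] and sym = graphD(3)[OF G]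
    let ?U = "{y \<in> Dset G. adj G v y}"
    have fU: "finite ?U" using graphD(5)[OF G] unfolding Dset_def by simp
    obtain u where u: "inj_on u {..<N1}" "u ` {..<N1} \<subseteq> ?U" using pick_inj[OF fU cU] by blast
    have uD: "u i \<in> Dset G \<and> adj G v (u i)" if "i < N1" for i using u(2) that by auto
    have uV: "u i \<in> verts G" if "i < N1" for i using uD[OF that] unfolding Dset_def by simp
    have exw: "\<exists>z. adj G (u i) z \<and> z \<noteq> v" if "i < N1" for i
    proof (rule ccontr)
      assume "\<not> ?thesis"
      then have "{z \<in> verts G. adj G (u i) z} \<subseteq> {v}" by auto
      then have "card {z \<in> verts G. adj G (u i) z} \<le> card {v}" by (rule card_mono[rotated]) simp
      moreover have "2 \<le> card {z \<in> verts G. adj G (u i) z}"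
        using uD[OF that] unfolding Dset_def degree_def by simp
      ultimately show False by simp
    qed
    define w where "w i = (SOME z. adj G (u i) z \<and> z \<noteq> v)" for i
    have w: "adj G (u i) (w i) \<and> w i \<noteq> v" if "i < N1" for i
      unfolding w_def by (rule someI_ex) (rule exw[OF that])
    have wV: "w i \<in> verts G" if "i < N1" for i using w[OF that] graphD(2)[OF G] by blast
    have "N1 \<le> card {..<N1}" by simp
    from RP_use[OF N1(2) finite_lessThan this, of "\<lambda>i j. adj G (u i) (u j)"]
    obtain B1 where B1: "B1 \<subseteq> {..<N1}" "card B1 = 2*N3+n"
      and h1: "(\<forall>i\<in>B1. \<forall>j\<in>B1. i<j \<longrightarrow> adj G (u i) (u j)) \<or> (\<forall>i\<in>B1. \<forall>j\<in>B1. i<j \<longrightarrow> \<not> adj G (u i) (u j))"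
      by blast
    have fB1: "finite B1" using B1(1) finite_subset by blast
    have B1N: "\<And>i. i \<in> B1 \<Longrightarrow> i < N1" using B1(1) by auto
    show ?thesis
    proof (cases "\<forall>i\<in>B1. \<forall>j\<in>B1. i<j \<longrightarrow> adj G (u i) (u j)")
      case True
      have "\<forall>i\<in>B1. \<forall>j\<in>B1. i \<noteq> j \<longrightarrow> adj G (u i) (u j)"
        by (rule homog_sym[OF True]) (rule sym)
      moreover have "\<forall>i\<in>B1. u i \<in> verts G" using uV B1N by blast
      moreover have "n \<le> card B1" using B1(2) by simp
      ultimately show ?thesis using winK[OF G fB1] by blast
    next
      case False
      then have h1': "\<forall>i\<in>B1. \<forall>j\<in>B1. i<j \<longrightarrow> \<not> adj G (u i) (u j)" using h1 by blast
      have ind1: "\<forall>i\<in>B1. \<forall>j\<in>B1. \<not> adj G (u i) (u j)"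
        by (rule homog_neg[OF h1']) (rule sym, assumption, rule irr)
      obtain B2 t where B2: "B2 \<subseteq> B1" "N3 \<le> card B2" and t: "\<forall>i\<in>B2. adj G v (w i) = t"
      proof -
        let ?T = "{i\<in>B1. adj G v (w i)}" and ?F = "{i\<in>B1. \<not> adj G v (w i)}"
        have "?T \<union> ?F = B1" "?T \<inter> ?F = {}" by auto
        then have "card ?T + card ?F = card B1" using fB1
          by (metis card_Un_disjoint finite_Un)
        then have "N3 \<le> card ?T \<or> N3 \<le> card ?F" using B1(2) by linarith
        moreover have "?T \<subseteq> B1" "?F \<subseteq> B1" by auto
        moreover have "\<forall>i\<in>?T. adj G v (w i) = True" "\<forall>i\<in>?F. adj G v (w i) = False" by auto
        ultimately show ?thesis using that by blast
      qed
      have fB2: "finite B2" using B2(1) fB1 finite_subset by blast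
      have "N3 \<le> card B2" by (rule B2(2))
      from RP_use[OF N3(2) fB2 this, of "\<lambda>i j. adj G (w i) (u j)"]
      obtain B3 where B3: "B3 \<subseteq> B2" "card B3 = N4"
        and h3: "(\<forall>i\<in>B3. \<forall>j\<in>B3. i<j \<longrightarrow> adj G (w i) (u j)) \<or> (\<forall>i\<in>B3. \<forall>j\<in>B3. i<j \<longrightarrow> \<not> adj G (w i) (u j))"
        by blast
      have fB3: "finite B3" using B3(1) fB2 finite_subset by blast
      have B3B1: "B3 \<subseteq> B1" using B3(1) B2(1) by blast
      have B3ne: "B3 \<noteq> {}" using B3(2) N4 N5 n by auto
      have injB: "inj_on u B" if "B \<subseteq> B1" for B using u(1) B1(1) that by (meson inj_on_subset order_trans)
      show ?thesis
      proof (cases "\<forall>i\<in>B3. \<forall>j\<in>B3. i<j \<longrightarrow> adj G (w i) (u j)")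
        case True
        define m where "m = Min B3"
        have m: "m \<in> B3" "\<forall>j\<in>B3. m \<le> j" using fB3 B3ne unfolding m_def by auto
        have mN: "m < N1" using m(1) B3B1 B1N by blast
        have a: "\<forall>j\<in>B3. adj G v (u j) \<and> adj G (w m) (u j)"
        proof
          fix j assume j: "j \<in> B3"
          have jN: "j < N1" using j B3B1 B1N by blast
          have "adj G (w m) (u j)"
          proof (cases "j = m")
            case True then show ?thesis using w[OF mN] sym by blast
          next
            case False
            then have "m < j" using m(2) j by (metis le_neq_implies_less)
            then show ?thesis using m(1) j \<open>\<forall>i\<in>B3. \<forall>j\<in>B3. i<j \<longrightarrow> adj G (w i) (u j)\<close> by blast
          qed
          then show "adj G v (u j) \<and> adj G (w m) (u j)" using uD[OF jN] by simp
        qed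
        have "n \<le> card B3" using B3(2) N4 N5 by simp
        moreover have "\<forall>i\<in>B3. \<forall>j\<in>B3. \<not> adj G (u i) (u j)" using ind1 B3B1 by blast
        ultimately show ?thesis
          using win2[OF G fB3 _ vV wV[OF mN] _ a _ injB[OF B3B1]] w[OF mN] by blast
      next
        case False
        then have nb3: "\<forall>i\<in>B3. \<forall>j\<in>B3. i<j \<longrightarrow> \<not> adj G (w i) (u j)" using h3 by blast
        have "N4 \<le> card B3" using B3(2) by simp
        from RP_use[OF N4(2) fB3 this, of "\<lambda>i j. adj G (w j) (u i)"]
        obtain B4 where B4: "B4 \<subseteq> B3" "card B4 = N5"
          and h4: "(\<forall>i\<in>B4. \<forall>j\<in>B4. i<j \<longrightarrow> adj G (w j) (u i)) \<or> (\<forall>i\<in>B4. \<forall>j\<in>B4. i<j \<longrightarrow> \<not> adj G (w j) (u i))"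
          by blast
        have fB4: "finite B4" using B4(1) fB3 finite_subset by blast
        have B4B1: "B4 \<subseteq> B1" using B4(1) B3B1 by blast
        have B4ne: "B4 \<noteq> {}" using B4(2) N5 n by auto
        show ?thesis
        proof (cases "\<forall>i\<in>B4. \<forall>j\<in>B4. i<j \<longrightarrow> adj G (w j) (u i)")
          case True
          define m where "m = Max B4"
          have m: "m \<in> B4" "\<forall>j\<in>B4. j \<le> m" using fB4 B4ne unfolding m_def by auto
          have mN: "m < N1" using m(1) B4B1 B1N by blast
          have a: "\<forall>j\<in>B4. adj G v (u j) \<and> adj G (w m) (u j)"
          proof
            fix j assume j: "j \<in> B4"
            have jN: "j < N1" using j B4B1 B1N by blast
            have "adj G (w m) (u j)"
            proof (cases "j = m")
              case True then show ?thesis using w[OF mN] sym by blast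
            next
              case False
              then have "j < m" using m(2) j by (metis le_neq_implies_less)
              then show ?thesis using m(1) j \<open>\<forall>i\<in>B4. \<forall>j\<in>B4. i<j \<longrightarrow> adj G (w j) (u i)\<close> by blast
            qed
            then show "adj G v (u j) \<and> adj G (w m) (u j)" using uD[OF jN] by simp
          qed
          have "n \<le> card B4" using B4(2) N5 by simp
          moreover have "\<forall>i\<in>B4. \<forall>j\<in>B4. \<not> adj G (u i) (u j)" using ind1 B4B1 by blast
          ultimately show ?thesis
            using win2[OF G fB4 _ vV wV[OF mN] _ a _ injB[OF B4B1]] w[OF mN] by blast
        next
          case False
          then have nb4: "\<forall>i\<in>B4. \<forall>j\<in>B4. i<j \<longrightarrow> \<not> adj G (w j) (u i)" using h4 by blast
          have cross: "\<forall>i\<in>B4. \<forall>j\<in>B4. i \<noteq> j \<longrightarrow> \<not> adj G (u i) (w j)"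
          proof (intro ballI impI)
            fix i j assume ij: "i \<in> B4" "j \<in> B4" "i \<noteq> j"
            have "\<not> adj G (w j) (u i)"
            proof (cases "i < j")
              case True then show ?thesis using nb4 ij by blast
            next
              case False then have "j < i" using ij(3) by simp
              then show ?thesis using nb3 ij B4(1) by blast
            qed
            then show "\<not> adj G (u i) (w j)" using sym by blast
          qed
          have "N5 \<le> card B4" using B4(2) by simp
          from RP_use[OF N5(2) fB4 this, of "\<lambda>i j. adj G (w i) (w j)"]
          obtain B5 where B5: "B5 \<subseteq> B4" "card B5 = n"
            and h5: "(\<forall>i\<in>B5. \<forall>j\<in>B5. i<j \<longrightarrow> adj G (w i) (w j)) \<or> (\<forall>i\<in>B5. \<forall>j\<in>B5. i<j \<longrightarrow> \<not> adj G (w i) (w j))"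
            by blast
          have fB5: "finite B5" using B5(1) fB4 finite_subset by blast
          have B5B1: "B5 \<subseteq> B1" using B5(1) B4B1 by blast
          have B5N: "\<And>i. i \<in> B5 \<Longrightarrow> i < N1" using B5B1 B1N by blast
          show ?thesis
          proof (cases "\<forall>i\<in>B5. \<forall>j\<in>B5. i<j \<longrightarrow> adj G (w i) (w j)")
            case True
            have "\<forall>i\<in>B5. \<forall>j\<in>B5. i \<noteq> j \<longrightarrow> adj G (w i) (w j)"
              by (rule homog_sym[OF True]) (rule sym)
            moreover have "\<forall>i\<in>B5. w i \<in> verts G" using wV B5N by blast
            moreover have "n \<le> card B5" using B5(2) by simp
            ultimately show ?thesis using winK[OF G fB5] by blast
          next
            case False
            then have h5': "\<forall>i\<in>B5. \<forall>j\<in>B5. i<j \<longrightarrow> \<not> adj G (w i) (w j)" using h5 by blast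
            have ind5: "\<forall>i\<in>B5. \<forall>j\<in>B5. \<not> adj G (w i) (w j)"
              by (rule homog_neg[OF h5']) (rule sym, assumption, rule irr)
            have a1: "\<forall>i\<in>B5. adj G v (u i) \<and> adj G (u i) (w i) \<and> w i \<noteq> v \<and> adj G v (w i) = t"
              using uD w B5N t B5(1) B4(1) B3(1) by blast
            have a2: "\<forall>i\<in>B5. \<forall>j\<in>B5. \<not> adj G (u i) (u j) \<and> \<not> adj G (w i) (w j) \<and> (i \<noteq> j \<longrightarrow> \<not> adj G (u i) (w j))"
              using ind1 ind5 cross B5B1 B5(1) by blast
            have "n \<le> card B5" using B5(2) by simp
            then show ?thesis using winSF[OF G fB5 _ vV a1 a2 injB[OF B5B1]] by blast
          qed
        qed
      qed
    qed
  qed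
  ultimately show ?thesis by blast
qed

theorem theorem1p4:
  fixes \<H> :: "nat graph set"
  assumes "\<forall>H\<in>\<H>. is_graph H"
  shows "(\<exists>c::nat. \<forall>G :: nat graph. is_graph G \<and> connected G \<and> family_free \<H> G
            \<longrightarrow> card {v \<in> verts G. degree G v \<ge> 2} < c)
     \<longleftrightarrow> (\<exists>n::nat. n > 0 \<and> family_le \<H> (unavoidable_family n))"
proof
  assume "\<exists>c::nat. \<forall>G :: nat graph. is_graph G \<and> connected G \<and> family_free \<H> G
            \<longrightarrow> card {v \<in> verts G. degree G v \<ge> 2} < c"
  then obtain c :: nat where c: "\<forall>G :: nat graph. is_graph G \<and> connected G \<and> family_free \<H> G
            \<longrightarrow> card {v \<in> verts G. degree G v \<ge> 2} < c" by blast
  show "\<exists>n::nat. n > 0 \<and> family_le \<H> (unavoidable_family n)"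
  proof (rule ccontr)
    assume nt: "\<not> ?thesis"
    have "(c+2::nat) > 0" by simp
    then have "\<not> family_le \<H> (unavoidable_family (c+2))" using nt by blast
    then obtain F where F: "F \<in> unavoidable_family (c+2)" "\<forall>H\<in>\<H>. \<not> induced_sub H F"
      unfolding family_le_def by blast
    have "good_fam F (c+2)" using good_all[OF _ F(1)] by simp
    then have g: "is_graph F" "connected F" "c \<le> card {v \<in> verts F. 2 \<le> degree F v}"
      unfolding good_fam_def by auto
    have "family_free \<H> F" using F(2) unfolding family_free_def by blast
    then have "card {v \<in> verts F. degree F v \<ge> 2} < c" using c[rule_format, of F] g(1,2) by simp
    then show False using g(3) by simp
  qed
next
  assume "\<exists>n::nat. n > 0 \<and> family_le \<H> (unavoidable_family n)"
  then obtain n where n: "n > 0" "family_le \<H> (unavoidable_family n)" by blast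
  obtain N0 where N0: "N0 \<ge> 1" "\<forall>(G::nat graph) v. is_graph G \<longrightarrow> v \<in> verts G \<longrightarrow>
     N0 \<le> card {y \<in> Dset G. adj G v y} \<longrightarrow> (\<exists>F\<in>unavoidable_family n. induced_sub F G)"
    using ramsey_chain[OF n(1), where 'a=nat] by auto
  have "card {v \<in> verts G. degree G v \<ge> 2} < N0^n + 1"
    if G: "is_graph G" "connected G" "family_free \<H> G" for G :: "nat graph"
  proof (rule ccontr)
    assume "\<not> ?thesis"
    then have cD: "N0^n < card (Dset G)" unfolding Dset_def by simp
    have fD: "finite (Dset G)" using graphD(5)[OF G(1)] unfolding Dset_def by simp
    have DV: "Dset G \<subseteq> verts G" unfolding Dset_def by auto
    have ex: "\<exists>F\<in>unavoidable_family n. induced_sub F G"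
    proof (cases "induced_sub (path_graph n) G")
      case True then show ?thesis unfolding unavoidable_family_def by blast
    next
      case False
      have "Dset G \<noteq> {}" using cD by auto
      then obtain r where rD: "r \<in> Dset G" by blast
      have conn: "\<forall>y\<in>Dset G. (\<lambda>a b. adj G a b \<and> a \<in> Dset G \<and> b \<in> Dset G)\<^sup>*\<^sup>* r y"
        using D_conn[OF G(1,2) rD] by simp
      have "\<exists>x\<in>Dset G. N0 \<le> card {y \<in> Dset G. adj G x y}"
      proof (rule ccontr)
        assume "\<not> ?thesis"
        then have "\<forall>x\<in>Dset G. card {y \<in> Dset G. adj G x y} \<le> N0 - 1" by auto
        from bfs_bound[OF G(1) fD DV rD conn this False]
        have "card (Dset G) \<le> (N0 - 1 + 1)^n" .
        then show False using cD N0(1) by simp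
      qed
      then obtain x where "x \<in> Dset G" "N0 \<le> card {y \<in> Dset G. adj G x y}" by blast
      moreover have "x \<in> verts G" using \<open>x \<in> Dset G\<close> DV by blast
      ultimately show ?thesis using N0(2)[rule_format, OF G(1)] by simp
    qed
    then obtain F where F: "F \<in> unavoidable_family n" "induced_sub F G" by blast
    obtain H where H: "H \<in> \<H>" "induced_sub H F" using n(2) F(1) unfolding family_le_def by blast
    have "induced_sub H G" by (rule induced_trans[OF H(2) F(2)])
    then show False using G(3) H(1) unfolding family_free_def by blast
  qed
  then show "\<exists>c::nat. \<forall>G :: nat graph. is_graph G \<and> connected G \<and> family_free \<H> G
            \<longrightarrow> card {v \<in> verts G. degree G v \<ge> 2} < c" by (intro exI[of _ "N0^n+1"]) auto
qed

end
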